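(* Let $0<p<1/2$ and let $\Phi\colon\mathbb N_+\to[1,\infty)$ be a non-decreasing function with $\Phi(n)\to\infty$ and $$\limsup_{k\to\infty}\frac{2^{k(2-2p)}}{\Phi(2^k)}=\infty.$$ Then there exists a martingale $F\in H_p(G)$ such that $$\sum_{m=1}^{\infty}\frac{\Vert \sigma_m^\kappa F\Vert_{L_{p,\infty}}^p}{\Phi(m)}=\infty.$$
   Context: $G$ is the Walsh (dyadic) group: the set of sequences $x=(x_0,x_1,\dots)$ with $x_k\in\{0,1\}$, with coordinatewise addition mod 2 and normalized Haar measure $\mu$. $\mathcal F_n$ is the $\sigma$-algebra generated by the dyadic intervals $I_n(x)=\{y\in G: y_i=x_i \text{ for } i<n\}$. The Rademacher functions are $r_k(x)=(-1)^{x_k}$. For $n\in\mathbb N$ write $n=\sum_i n_i2^i$ with $n_i\in\{0,1\}$ and, for $n\ge1$, $|n|=\max\{j:n_j\neq0\}$. The Walsh–Kaczmarz functions are $\kappa_0=1$ and, for $n\geq1$, $\kappa_n(x)=r_{|n|}(x)(-1)^{\sum_{k=0}^{|n|-1}n_kx_{|n|-1-k}}$. A martingale $f=(f^{(n)})_{n}$ with respect to $(\mathcal F_n)$ belongs to the Hardy space $H_p(G)$ if $\Vert f\Vert_{H_p}:=\Vert \sup_n|f^{(n)}|\Vert_{L_p(G)}<\infty$. The Walsh–Kaczmarz–Fourier coefficients of a martingale are $\widehat f^\kappa(i)=\lim_{k\to\infty}\int_G f^{(k)}\kappa_i\,d\mu$; partial sums are $S_j^\kappa f=\sum_{k=0}^{j-1}\widehat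 f^\kappa(k)\kappa_k$, and Fejér means are $\sigma_n^\kappa f=\frac1n\sum_{j=1}^nS_j^\kappa f$. The weak $L_p$ quasi-norm is given by $\Vert g\Vert_{L_{p,\infty}}^p=\sup_{\lambda>0}\lambda^p\mu(\{x\in G:|g(x)|>\lambda\})$. *)

theory Defs
  imports "HOL-Probability.Probability"
begin

text \<open>The Walsh group: sequences x :: nat => bool (True stands for the digit 1),
  with the normalized Haar measure = infinite product of fair coin measures.\<close>

definition walsh_mu :: "(nat \<Rightarrow> bool) measure" where
  "walsh_mu = Pi\<^sub>M UNIV (\<lambda>_. measure_pmf (bernoulli_pmf (1/2)))"

definition dig :: "(nat \<Rightarrow> bool) \<Rightarrow> nat \<Rightarrow> nat" where
  "dig x k = (if x k then 1 else 0)"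

definition rad :: "nat \<Rightarrow> (nat \<Rightarrow> bool) \<Rightarrow> real" where
  "rad k x = (-1) ^ dig x k"

definition topbit :: "nat \<Rightarrow> nat" where
  "topbit n = (GREATEST j. bit n j)"

definition nbit :: "nat \<Rightarrow> nat \<Rightarrow> nat" where
  "nbit n k = (if bit n k then 1 else 0)"

definition kacz :: "nat \<Rightarrow> (nat \<Rightarrow> bool) \<Rightarrow> real" where
  "kacz n x = (if n = 0 then 1 else
     rad (topbit n) x * (-1) ^ (\<Sum>k<topbit n. nbit n k * dig x (topbit n - 1 - k)))"

text \<open>Dyadic martingales: f n is F_n measurable (depends only on x_0..x_{n-1})
  and the conditional expectation of f (n+1) w.r.t. F_n is f n.\<close>
definition dyadic_martingale :: "(nat \<Rightarrow> (nat \<Rightarrow> bool) \<Rightarrow> real) \<Rightarrow> bool" where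
  "dyadic_martingale f \<longleftrightarrow>
     (\<forall>n x y. (\<forall>i<n. x i = y i) \<longrightarrow> f n x = f n y) \<and>
     (\<forall>n x. f n x = (f (Suc n) (x(n := False)) + f (Suc n) (x(n := True))) / 2)"

definition in_Hp :: "real \<Rightarrow> (nat \<Rightarrow> (nat \<Rightarrow> bool) \<Rightarrow> real) \<Rightarrow> bool" where
  "in_Hp p f \<longleftrightarrow> dyadic_martingale f \<and>
     (\<integral>\<^sup>+ x. (SUP n. ennreal (\<bar>f n x\<bar> powr p)) \<partial>walsh_mu) < \<infinity>"

definition kacz_coeff :: "(nat \<Rightarrow> (nat \<Rightarrow> bool) \<Rightarrow> real) \<Rightarrow> nat \<Rightarrow> real" where
  "kacz_coeff f i = lim (\<lambda>k. \<integral>x. f k x * kacz i x \<partial>walsh_mu)"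

definition kacz_partial :: "(nat \<Rightarrow> (nat \<Rightarrow> bool) \<Rightarrow> real) \<Rightarrow> nat \<Rightarrow> (nat \<Rightarrow> bool) \<Rightarrow> real" where
  "kacz_partial f j x = (\<Sum>k<j. kacz_coeff f k * kacz k x)"

definition kacz_fejer :: "(nat \<Rightarrow> (nat \<Rightarrow> bool) \<Rightarrow> real) \<Rightarrow> nat \<Rightarrow> (nat \<Rightarrow> bool) \<Rightarrow> real" where
  "kacz_fejer f n x = (1 / real n) * (\<Sum>j=1..n. kacz_partial f j x)"

definition weak_Lp_pow :: "real \<Rightarrow> ((nat \<Rightarrow> bool) \<Rightarrow> real) \<Rightarrow> ennreal" where
  "weak_Lp_pow p g = (SUP t\<in>{0<..}. ennreal (t powr p) *
      emeasure walsh_mu {x \<in> space walsh_mu. \<bar>g x\<bar> > t})"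

end

theory Submission
  imports Defs
begin


abbreviation "Mb \<equiv> measure_pmf (bernoulli_pmf (1/2))"

lemma space_walsh[simp]: "space walsh_mu = UNIV"
  by (simp add: walsh_mu_def space_PiM)

lemma sets_Mb[simp]: "sets Mb = UNIV" by simp

lemma prob_walsh: "prob_space walsh_mu"
  unfolding walsh_mu_def by (intro prob_space_PiM prob_space_measure_pmf)

lemma meas_coord: "(\<lambda>x. x t) \<in> walsh_mu \<rightarrow>\<^sub>M count_space UNIV"
proof -
  have "(\<lambda>x. x t) \<in> walsh_mu \<rightarrow>\<^sub>M Mb"
    unfolding walsh_mu_def by (rule measurable_component_singleton) simp
  then show ?thesis using measurable_cong_sets[of walsh_mu walsh_mu Mb "count_space UNIV"] by simp
qed

lemma meas_fin:
  "(\<And>x y. (\<And>i. i<n \<Longrightarrow> x i = y i) \<Longrightarrow> g x = g y) \<Longrightarrow> (g :: (nat\<Rightarrow>bool) \<Rightarrow> real) \<in> borel_measurable walsh_mu"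
proof (induction n arbitrary: g)
  case 0
  then have "g = (\<lambda>x. g (\<lambda>_. False))" by (auto intro!: ext)
  then show ?case by (metis borel_measurable_const)
next
  case (Suc n)
  have h: "g x = (if x n then g (x(n:=True)) else g (x(n:=False)))" for x
    by (cases "x n") (auto intro!: Suc.prems split: if_splits)
  have m1: "(\<lambda>x. g (x(n:=b))) \<in> borel_measurable walsh_mu" for b
    by (rule Suc.IH) (auto intro!: Suc.prems)
  have p: "Measurable.pred walsh_mu (\<lambda>x. x n)"
    using meas_coord by simp
  have "(\<lambda>x. if x n then g (x(n:=True)) else g (x(n:=False))) \<in> borel_measurable walsh_mu"
    using p m1 by (intro measurable_If) (auto simp: pred_def)
  then show ?case using h by simp
qed

definition flip :: "nat \<Rightarrow> (nat\<Rightarrow>bool) \<Rightarrow> (nat\<Rightarrow>bool)" where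
  "flip t x = x(t := \<not> x t)"

lemma meas_Mb: "(\<lambda>x. h (x t)) \<in> walsh_mu \<rightarrow>\<^sub>M Mb"
proof -
  have "(\<lambda>x. h (x t)) \<in> walsh_mu \<rightarrow>\<^sub>M count_space UNIV"
    using meas_coord[of t] by (intro measurable_compose[where g=h, OF _ measurable_count_space]) 
      (auto simp: pred_def measurable_def)
  then show ?thesis using measurable_cong_sets[of walsh_mu walsh_mu Mb "count_space UNIV"] by simp
qed

lemma flip_meas: "flip t \<in> walsh_mu \<rightarrow>\<^sub>M walsh_mu"
proof -
  have "(\<lambda>x. flip t x i) \<in> walsh_mu \<rightarrow>\<^sub>M Mb" for i
  proof (cases "i = t")
    case True
    then show ?thesis using meas_Mb[of Not t] by (simp add: flip_def)
  next
    case False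
    then show ?thesis using meas_Mb[of "\<lambda>b. b" i] by (simp add: flip_def)
  qed
  then show ?thesis unfolding walsh_mu_def
    by (intro measurable_PiM_single') (auto simp: walsh_mu_def space_PiM)
qed

lemma prod_emb_walsh: "prod_emb UNIV (\<lambda>_. Mb) J (Pi\<^sub>E J A) = {x. \<forall>j\<in>J. x j \<in> A j}"
  by (auto simp: prod_emb_def space_PiM PiE_def Pi_def extensional_def)

lemma emeasure_Mb_not: "emeasure Mb (Not -` S) = emeasure Mb S"
proof -
  have e: "Not -` S = Not ` S" by force
  have "emeasure Mb (Not -` S) = ennreal (\<Sum>s\<in>Not -` S. pmf (bernoulli_pmf (1/2)) s)"
    by (rule emeasure_measure_pmf_finite) simp
  also have "(\<Sum>s\<in>Not -` S. pmf (bernoulli_pmf (1/2)) s) = (\<Sum>s\<in>Not ` S. pmf (bernoulli_pmf (1/2)) s)"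
    by (simp only: e)
  also have "\<dots> = (\<Sum>s\<in>S. pmf (bernoulli_pmf (1/2)) (\<not> s))"
    by (subst sum.reindex) (auto simp: inj_on_def)
  also have "\<dots> = (\<Sum>s\<in>S. pmf (bernoulli_pmf (1/2)) s)"
    by (intro sum.cong) auto
  also have "ennreal \<dots> = emeasure Mb S" by (rule emeasure_measure_pmf_finite[symmetric]) simp
  finally show ?thesis .
qed

lemma distr_flip: "distr walsh_mu walsh_mu (flip t) = walsh_mu"
proof (rule measure_eqI_PiM_infinite[where I=UNIV and M="\<lambda>_. Mb"])
  show "sets (distr walsh_mu walsh_mu (flip t)) = sets (Pi\<^sub>M UNIV (\<lambda>_. Mb))"
    by (simp add: walsh_mu_def)
  show "sets walsh_mu = sets (Pi\<^sub>M UNIV (\<lambda>_. Mb))" by (simp add: walsh_mu_def)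
  show "finite_measure (distr walsh_mu walsh_mu (flip t))"
    using prob_walsh flip_meas by (intro prob_space.finite_measure prob_space.prob_space_distr) auto
next
  fix A J assume J: "finite (J::nat set)" "J \<subseteq> UNIV" and A: "\<And>i. i \<in> J \<Longrightarrow> A i \<in> sets Mb"
  define A' where "A' i = (if i = t then Not -` A i else A i)" for i
  have X: "prod_emb UNIV (\<lambda>_. Mb) J (Pi\<^sub>E J A) \<in> sets walsh_mu"
    unfolding walsh_mu_def using J by (intro sets_PiM_I) auto
  have pre: "flip t -` prod_emb UNIV (\<lambda>_. Mb) J (Pi\<^sub>E J A)
      = prod_emb UNIV (\<lambda>_. Mb) J (Pi\<^sub>E J A')"
    unfolding prod_emb_walsh by (auto simp: flip_def A'_def)
  have "emeasure (distr walsh_mu walsh_mu (flip t)) (prod_emb UNIV (\<lambda>_. Mb) J (Pi\<^sub>E J A))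
     = emeasure walsh_mu (prod_emb UNIV (\<lambda>_. Mb) J (Pi\<^sub>E J A'))"
    using X flip_meas by (simp add: emeasure_distr pre)
  also have "\<dots> = (\<Prod>i\<in>J. emeasure Mb (A' i))"
    unfolding walsh_mu_def using J by (intro emeasure_PiM_emb prob_space_measure_pmf) auto
  also have "\<dots> = (\<Prod>i\<in>J. emeasure Mb (A i))"
    by (intro prod.cong) (auto simp: A'_def emeasure_Mb_not)
  also have "\<dots> = emeasure walsh_mu (prod_emb UNIV (\<lambda>_. Mb) J (Pi\<^sub>E J A))"
    unfolding walsh_mu_def using J by (intro emeasure_PiM_emb[symmetric] prob_space_measure_pmf) auto
  finally show "emeasure (distr walsh_mu walsh_mu (flip t)) (prod_emb UNIV (\<lambda>_. Mb) J (Pi\<^sub>E J A))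
     = emeasure walsh_mu (prod_emb UNIV (\<lambda>_. Mb) J (Pi\<^sub>E J A))" .
qed

lemma integral_flip:
  assumes "g \<in> borel_measurable walsh_mu"
  shows "(\<integral>x. g (flip t x) \<partial>walsh_mu) = (\<integral>x. (g x :: real) \<partial>walsh_mu)"
proof -
  have "(\<integral>x. g x \<partial>walsh_mu) = (\<integral>x. g x \<partial>(distr walsh_mu walsh_mu (flip t)))"
    by (simp add: distr_flip)
  also have "\<dots> = (\<integral>x. g (flip t x) \<partial>walsh_mu)"
    using assms flip_meas by (intro integral_distr) auto
  finally show ?thesis by simp
qed

lemma integral_odd_zero:
  assumes "g \<in> borel_measurable walsh_mu" "\<And>x. g (flip t x) = - g x"
  shows "(\<integral>x. (g x :: real) \<partial>walsh_mu) = 0"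
  using integral_flip[OF assms(1), of t] assms(2) by simp

lemma emeasure_cyl: "emeasure walsh_mu {x. \<forall>i<k. \<not> x i} = ennreal ((1/2)^k)"
proof -
  have "{x. \<forall>i<k. \<not> x i} = prod_emb UNIV (\<lambda>_. Mb) {..<k} (Pi\<^sub>E {..<k} (\<lambda>_. {False}))"
    unfolding prod_emb_walsh by auto
  also have "emeasure walsh_mu \<dots> = (\<Prod>i\<in>{..<k}. emeasure Mb {False})"
    unfolding walsh_mu_def by (intro emeasure_PiM_emb prob_space_measure_pmf) auto
  also have "\<dots> = (\<Prod>i\<in>{..<k}. ennreal (1/2))"
    by (simp add: emeasure_pmf_single)
  also have "\<dots> = ennreal (\<Prod>i\<in>{..<k}. 1/2)" by (rule prod_ennreal) auto
  also have "\<dots> = ennreal ((1/2)^k)" by simp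
  finally show ?thesis .
qed




lemma topbit_eq:
  assumes "2^k \<le> n" "n < 2^(Suc k)"
  shows "topbit n = k"
  unfolding topbit_def
proof (rule Greatest_equality)
  have "n div 2^k = 1" using assms
    by (intro div_nat_eqI) auto
  then show "bit n k" by (simp add: bit_iff_odd)
next
  fix j assume "bit n j"
  show "j \<le> k"
  proof (rule ccontr)
    assume "\<not> j \<le> k"
    then have "2^(Suc k) \<le> (2::nat)^j" by (intro power_increasing) auto
    then have "n div 2^j = 0" using assms by auto
    then show False using \<open>bit n j\<close> by (simp add: bit_iff_odd)
  qed
qed

lemma topbit_bounds:
  assumes "n \<ge> 1"
  shows "2^(topbit n) \<le> n" "n < 2^(Suc (topbit n))"
proof -
  obtain k where "2^k \<le> n" "n < 2^(k+1)" using ex_power_ivl1[of 2 n] assms by auto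
  then show "2^(topbit n) \<le> n" "n < 2^(Suc (topbit n))" using topbit_eq[of k n] by auto
qed

lemma kacz_pm: "kacz n x = 1 \<or> kacz n x = -1"
  unfolding kacz_def rad_def by (auto simp: minus_one_power_iff)

lemma abs_kacz[simp]: "\<bar>kacz n x\<bar> = 1"
  using kacz_pm[of n x] by auto

lemma kacz_local:
  assumes "\<And>i. i \<le> topbit n \<Longrightarrow> x i = y i"
  shows "kacz n x = kacz n y"
proof -
  have "dig x (topbit n - 1 - k) = dig y (topbit n - 1 - k)" for k
    using assms[of "topbit n - 1 - k"] by (simp add: dig_def)
  moreover have "rad (topbit n) x = rad (topbit n) y" using assms[of "topbit n"] by (simp add: rad_def dig_def)
  ultimately show ?thesis unfolding kacz_def by simp
qed

lemma kacz_flip_top: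
  assumes "n \<ge> 1"
  shows "kacz n (flip (topbit n) x) = - kacz n x"
proof -
  have "dig (flip (topbit n) x) (topbit n - 1 - k) = dig x (topbit n - 1 - k)" if "k < topbit n" for k
  proof -
    have "topbit n - 1 - k \<noteq> topbit n" using that by linarith
    then show ?thesis by (simp add: dig_def flip_def)
  qed
  moreover have "rad (topbit n) (flip (topbit n) x) = - rad (topbit n) x"
    by (simp add: rad_def dig_def flip_def)
  ultimately show ?thesis unfolding kacz_def using assms by simp
qed

lemma kacz_flip_high:
  assumes "topbit n < t \<or> n = 0"
  shows "kacz n (flip t x) = kacz n x"
proof (cases "n = 0")
  case False
  then show ?thesis using assms by (intro kacz_local) (auto simp: flip_def)
qed (simp add: kacz_def)

lemma kacz_block:
  assumes "n \<ge> 1" "\<And>i. i < topbit n \<Longrightarrow> \<not> x i"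
  shows "kacz n x = rad (topbit n) x"
proof -
  have "dig x (topbit n - 1 - k) = 0" if "k < topbit n" for k
    using assms(2)[of "topbit n - 1 - k"] that by (simp add: dig_def)
  then show ?thesis unfolding kacz_def using assms by simp
qed

definition atm :: "nat \<Rightarrow> (nat \<Rightarrow> bool) \<Rightarrow> real" where
  "atm k x = (if \<forall>i<k. \<not> x i then rad k x else 0)"

lemma atm_local: "(\<And>i. i < Suc k \<Longrightarrow> x i = y i) \<Longrightarrow> atm k x = atm k y"
  by (simp add: atm_def rad_def dig_def)

lemma atm_meas: "atm k \<in> borel_measurable walsh_mu"
  by (rule meas_fin[of "Suc k"]) (rule atm_local)

lemma kacz_meas: "kacz n \<in> borel_measurable walsh_mu"
  by (rule meas_fin[of "Suc (topbit n)"]) (auto intro!: kacz_local)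

lemma atm_flip: "atm k (flip k x) = - atm k x"
  by (simp add: atm_def flip_def rad_def dig_def)

lemma atm_flip_high: "k < t \<Longrightarrow> atm k (flip t x) = atm k x"
  by (simp add: atm_def flip_def rad_def dig_def)

lemma measure_cyl: "measure walsh_mu {x. \<forall>i<k. \<not> x i} = (1/2)^k"
  using emeasure_cyl[of k] by (simp add: measure_def)

lemma cyl_sets: "{x. \<forall>i<k. \<not> x i} \<in> sets walsh_mu"
proof -
  have "(indicator {x. \<forall>i<k. \<not> x i} :: _ \<Rightarrow> real) \<in> borel_measurable walsh_mu"
  proof (rule meas_fin[of k])
    fix x y :: "nat \<Rightarrow> bool" assume h: "\<And>i. i<k \<Longrightarrow> x i = y i"
    then have "(\<forall>i<k. \<not> x i) = (\<forall>i<k. \<not> y i)" by auto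
    then show "(indicator {x. \<forall>i<k. \<not> x i} x :: real) = indicator {x. \<forall>i<k. \<not> x i} y"
      by (simp add: indicator_def)
  qed
  then have "{x. \<forall>i<k. \<not> x i} \<inter> space walsh_mu \<in> sets walsh_mu"
    by (rule borel_measurable_indicator_iff[THEN iffD1])
  then show ?thesis by (simp only: space_walsh Int_UNIV_right)
qed

lemma integral_atm_kacz:
  "(\<integral>x. atm k x * kacz n x \<partial>walsh_mu) = (if n \<ge> 1 \<and> topbit n = k then (1/2)^k else 0)"
proof -
  have meas: "(\<lambda>x. atm k x * kacz n x) \<in> borel_measurable walsh_mu"
    using atm_meas kacz_meas by (rule borel_measurable_times)
  consider "n \<ge> 1" "topbit n = k" | "n = 0 \<or> topbit n < k" | "n \<ge> 1" "topbit n > k" by linarith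
  then show ?thesis
  proof cases
    case 1
    have "atm k x * kacz n x = indicator {x. \<forall>i<k. \<not> x i} x" for x
    proof (cases "\<forall>i<k. \<not> x i")
      case True
      then have "kacz n x = rad k x" using kacz_block[of n x] 1 by auto
      then show ?thesis using True by (simp add: atm_def rad_def)
    qed (auto simp: atm_def indicator_def)
    then have "(\<integral>x. atm k x * kacz n x \<partial>walsh_mu) = measure walsh_mu {x. \<forall>i<k. \<not> x i}"
      using cyl_sets by simp
    then show ?thesis using 1 measure_cyl by simp
  next
    case 2
    have "(\<integral>x. atm k x * kacz n x \<partial>walsh_mu) = 0"
    proof (rule integral_odd_zero[OF meas, where t=k])
      fix x show "atm k (flip k x) * kacz n (flip k x) = - (atm k x * kacz n x)"
        using 2 kacz_flip_high[of n k x] by (auto simp: atm_flip)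
    qed
    then show ?thesis using 2 by auto
  next
    case 3
    have "(\<integral>x. atm k x * kacz n x \<partial>walsh_mu) = 0"
    proof (rule integral_odd_zero[OF meas, where t="topbit n"])
      fix x show "atm k (flip (topbit n) x) * kacz n (flip (topbit n) x) = - (atm k x * kacz n x)"
        using 3 by (simp add: atm_flip_high kacz_flip_top)
    qed
    then show ?thesis using 3 by auto
  qed
qed




lemma powr_subadd:
  fixes a b p :: real
  assumes "0 \<le> a" "0 \<le> b" "0 < p" "p \<le> 1"
  shows "(a + b) powr p \<le> a powr p + b powr p"
proof (cases "a + b = 0")
  case True then show ?thesis using assms by auto
next
  case False
  then have ab: "0 < a + b" using assms by auto
  have ha: "a * (a + b) powr (p - 1) \<le> a powr p"
  proof (cases "a = 0")
    case False
    then have "0 < a" using assms by auto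
    then have "(a + b) powr (p - 1) \<le> a powr (p - 1)"
      using assms by (intro powr_mono2') auto
    then have "a * (a + b) powr (p - 1) \<le> a * a powr (p - 1)"
      using assms by (intro mult_left_mono) auto
    also have "\<dots> = a powr p" using \<open>0 < a\<close> by (simp add: powr_diff field_simps powr_one)
    finally show ?thesis .
  qed (use assms in simp)
  have hb: "b * (a + b) powr (p - 1) \<le> b powr p"
  proof (cases "b = 0")
    case False
    then have "0 < b" using assms by auto
    then have "(a + b) powr (p - 1) \<le> b powr (p - 1)"
      using assms by (intro powr_mono2') auto
    then have "b * (a + b) powr (p - 1) \<le> b * b powr (p - 1)"
      using assms by (intro mult_left_mono) auto
    also have "\<dots> = b powr p" using \<open>0 < b\<close> by (simp add: powr_diff field_simps powr_one)
    finally show ?thesis .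
  qed (use assms in simp)
  have "(a + b) powr p = (a + b) * (a + b) powr (p - 1)"
    using ab by (simp add: powr_diff field_simps powr_one)
  also have "\<dots> = a * (a + b) powr (p - 1) + b * (a + b) powr (p - 1)" by (simp add: algebra_simps)
  finally show ?thesis using ha hb by linarith
qed

lemma powr_sum_le:
  fixes f :: "nat \<Rightarrow> real"
  assumes "0 < p" "p \<le> 1"
  shows "\<bar>\<Sum>j<n. f j\<bar> powr p \<le> (\<Sum>j<n. \<bar>f j\<bar> powr p)"
proof (induction n)
  case 0 then show ?case using assms by simp
next
  case (Suc n)
  have "\<bar>\<Sum>j<Suc n. f j\<bar> powr p \<le> (\<bar>\<Sum>j<n. f j\<bar> + \<bar>f n\<bar>) powr p"
    using assms by (intro powr_mono2) (auto simp: abs_triangle_ineq)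
  also have "\<dots> \<le> \<bar>\<Sum>j<n. f j\<bar> powr p + \<bar>f n\<bar> powr p"
    using assms by (intro powr_subadd) auto
  also have "\<dots> \<le> (\<Sum>j<Suc n. \<bar>f j\<bar> powr p)" using Suc by simp
  finally show ?case .
qed

lemma sum_split_add: "(\<Sum>i<a + b. f i) = (\<Sum>i<a. f i) + (\<Sum>i<b. f (a + i :: nat))"
  by (induction b) (auto simp: add.assoc)

lemma fejer_swap: "(\<Sum>j=1..m. (\<Sum>k<j. a k)) = (\<Sum>k<m. real (m - k) * (a k :: real))"
proof (induction m)
  case 0 then show ?case by simp
next
  case (Suc m)
  have "(\<Sum>j=1..Suc m. (\<Sum>k<j. a k)) = (\<Sum>j=1..m. (\<Sum>k<j. a k)) + (\<Sum>k<Suc m. a k)"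
    by simp
  also have "\<dots> = (\<Sum>k<m. real (m - k) * a k) + (\<Sum>k<Suc m. a k)" using Suc by simp
  also have "\<dots> = (\<Sum>k<Suc m. real (Suc m - k) * a k)"
  proof -
    have "(\<Sum>k<Suc m. real (Suc m - k) * a k) = (\<Sum>k<Suc m. real (m - k) * a k + a k)"
      by (intro sum.cong) (auto simp: Suc_diff_le of_nat_Suc algebra_simps)
    also have "\<dots> = (\<Sum>k<Suc m. real (m - k) * a k) + (\<Sum>k<Suc m. a k)" by (simp add: sum.distrib)
    also have "(\<Sum>k<Suc m. real (m - k) * a k) = (\<Sum>k<m. real (m - k) * a k)" by simp
    finally show ?thesis by simp
  qed
  finally show ?case .
qed

lemma gauss2: "2 * (\<Sum>r<M. int (M - r)) = int M * (int M + 1)"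
proof (induction M)
  case (Suc M)
  have "(\<Sum>r<Suc M. int (Suc M - r)) = (\<Sum>r<M. int (M - r)) + int M + 1"
  proof -
    have "(\<Sum>r<Suc M. int (Suc M - r)) = (\<Sum>r<M. int (Suc M - r)) + 1" by simp
    also have "(\<Sum>r<M. int (Suc M - r)) = (\<Sum>r<M. int (M - r) + 1)"
      by (intro sum.cong) auto
    also have "\<dots> = (\<Sum>r<M. int (M - r)) + int M" by (simp add: sum.distrib)
    finally show ?thesis by simp
  qed
  then show ?case using Suc by (simp add: algebra_simps)
qed simp

lemma parity_sum:
  fixes e :: "nat \<Rightarrow> real"
  assumes e: "\<And>r. e r = 1 \<or> e r = -1"
  shows "\<bar>\<Sum>r<4*q+1. real (4*q+1 - r) * e r\<bar> \<ge> 1"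
proof -
  define M where "M = 4*q+1"
  define \<epsilon> :: "nat \<Rightarrow> int" where "\<epsilon> r = (if e r = 1 then 1 else -1)" for r
  have e\<epsilon>: "e r = of_int (\<epsilon> r)" for r using e[of r] by (auto simp: \<epsilon>_def)
  have "(\<Sum>r<M. real (M - r) * e r) = of_int (\<Sum>r<M. int (M - r) * \<epsilon> r)"
    by (simp add: e\<epsilon>)
  moreover have "odd (\<Sum>r<M. int (M - r) * \<epsilon> r)"
  proof -
    have d: "2 dvd ((\<Sum>r<M. int (M - r) * \<epsilon> r) - (\<Sum>r<M. int (M - r)))"
    proof -
      have "(\<Sum>r<M. int (M - r) * \<epsilon> r) - (\<Sum>r<M. int (M - r)) = (\<Sum>r<M. int (M - r) * (\<epsilon> r - 1))"
        by (simp add: sum_subtractf[symmetric] algebra_simps)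
      moreover have "2 dvd (\<Sum>r<M. int (M - r) * (\<epsilon> r - 1))"
        by (intro dvd_sum) (auto simp: \<epsilon>_def)
      ultimately show ?thesis by simp
    qed
    have "2 * (\<Sum>r<M. int (M - r)) = 2 * (int (4*q+1) * (2 * int q + 1))"
      using gauss2[of M] by (simp add: M_def algebra_simps)
    then have "(\<Sum>r<M. int (M - r)) = int (4*q+1) * (2 * int q + 1)" by simp
    then have "odd (\<Sum>r<M. int (M - r))" by simp
    then show ?thesis using d by (metis dvd_add_right_iff diff_add_cancel)
  qed
  then have "(\<Sum>r<M. int (M - r) * \<epsilon> r) \<noteq> 0" by auto
  then have "\<bar>(\<Sum>r<M. int (M - r) * \<epsilon> r)\<bar> \<ge> 1" by linarith
  ultimately show ?thesis unfolding M_def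
    by (metis of_int_1_le_iff of_int_abs)
qed




definition beta :: "real \<Rightarrow> (nat \<Rightarrow> nat) \<Rightarrow> nat \<Rightarrow> real" where
  "beta p ks J = 2 powr (real (ks J) * (1/p - 1) - real J / p)"

definition cyl :: "nat \<Rightarrow> (nat \<Rightarrow> bool) set" where
  "cyl k = {x. \<forall>i<k. \<not> x i}"

lemma half_pow_r: "2 powr (real k - real j) * (1/2)^k = ((1/2::real)^j)"
proof -
  have "(1/2::real)^k = 2 powr (- real k)"
    by (simp add: powr_minus_divide powr_realpow power_one_over)
  moreover have "(1/2::real)^j = 2 powr (- real j)"
    by (simp add: powr_minus_divide powr_realpow power_one_over)
  ultimately show ?thesis by (simp add: powr_add[symmetric])
qed

locale constr =
  fixes p :: real and ks :: "nat \<Rightarrow> nat"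
  assumes p_pos: "0 < p" and p_half: "p < 1/2"
    and ks_mono: "strict_mono ks"
    and ks_ge2: "\<And>J. ks J \<ge> 2"
    and dom: "\<And>J. 2^(ks (Suc J) + 1) * (2^(ks J + 1) * beta p ks J) \<le> beta p ks (Suc J) / 2"
begin

abbreviation "\<beta> \<equiv> beta p ks"

definition trm :: "nat \<Rightarrow> (nat \<Rightarrow> bool) \<Rightarrow> real" where
  "trm j x = \<beta> j * 2^(ks j) * atm (ks j) x"

definition FF :: "nat \<Rightarrow> (nat \<Rightarrow> bool) \<Rightarrow> real" where
  "FF n x = (\<Sum>j<n. if ks j < n then trm j x else 0)"

definition coefb :: "nat \<Rightarrow> real" where
  "coefb i = (\<Sum>j<Suc (topbit i). if 1 \<le> i \<and> ks j = topbit i then \<beta> j else 0)"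

lemma beta_pos: "0 < \<beta> J" by (simp add: beta_def)

lemma beta_Suc: "\<beta> J \<le> \<beta> (Suc J)"
proof -
  have "(1::real) \<le> 2^(ks (Suc J) + 1) * 2^(ks J + 1)"
    using one_le_power[of "2::real" "ks (Suc J) + 1 + (ks J + 1)"] by (simp add: power_add)
  then have "1 * \<beta> J \<le> (2^(ks (Suc J) + 1) * 2^(ks J + 1)) * \<beta> J"
    using beta_pos[of J] by (intro mult_right_mono) auto
  then have "\<beta> J \<le> 2^(ks (Suc J) + 1) * (2^(ks J + 1) * \<beta> J)"
    by (simp add: mult.assoc)
  also have "\<dots> \<le> \<beta> (Suc J) / 2" by (rule dom)
  also have "\<dots> \<le> \<beta> (Suc J)" using beta_pos[of "Suc J"] by simp
  finally show ?thesis .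
qed

lemma beta_mono: "I \<le> J \<Longrightarrow> \<beta> I \<le> \<beta> J"
  using incseq_SucI[of \<beta>, OF beta_Suc] by (simp add: incseq_def)

lemma ks_ge: "j \<le> ks j" using ks_mono by (rule seq_suble)

lemma ks_less_iff: "ks i < ks j \<longleftrightarrow> i < j"
  using ks_mono by (simp add: strict_mono_less)

lemma ks_eq_iff: "ks i = ks j \<longleftrightarrow> i = j"
  using ks_mono by (simp add: strict_mono_eq)

lemma FF_local: "(\<And>i. i < n \<Longrightarrow> x i = y i) \<Longrightarrow> FF n x = FF n y"
  unfolding FF_def trm_def
  by (intro sum.cong refl) (auto intro!: atm_local)

lemma FF_Suc: "FF (Suc n) y = FF n y + (\<Sum>j<Suc n. if ks j = n then trm j y else 0)"
proof -
  have "FF (Suc n) y = (\<Sum>j<Suc n. (if ks j < n then trm j y else 0) + (if ks j = n then trm j y else 0))"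
    unfolding FF_def by (intro sum.cong) auto
  also have "\<dots> = (\<Sum>j<Suc n. if ks j < n then trm j y else 0) + (\<Sum>j<Suc n. if ks j = n then trm j y else 0)"
    by (simp add: sum.distrib)
  also have "(\<Sum>j<Suc n. if ks j < n then trm j y else 0) = FF n y"
    using ks_ge[of n] by (simp add: FF_def)
  finally show ?thesis .
qed

lemma atm_pair: "atm n (x(n:=False)) + atm n (x(n:=True)) = 0"
  by (simp add: atm_def rad_def dig_def)

lemma FF_mart: "dyadic_martingale FF"
  unfolding dyadic_martingale_def
proof (intro conjI allI impI)
  fix n x y assume "\<forall>i<n. (x::nat\<Rightarrow>bool) i = y i"
  then show "FF n x = FF n y" by (intro FF_local) auto
next
  fix n and x :: "nat \<Rightarrow> bool"
  have l: "FF n (x(n:=b)) = FF n x" for b by (rule FF_local) auto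
  have "(\<Sum>j<Suc n. if ks j = n then trm j (x(n:=False)) else 0) + (\<Sum>j<Suc n. if ks j = n then trm j (x(n:=True)) else 0)
       = (\<Sum>j<Suc n. if ks j = n then \<beta> j * 2^(ks j) * (atm n (x(n:=False)) + atm n (x(n:=True))) else 0)"
    by (simp add: sum.distrib[symmetric] trm_def algebra_simps if_distrib cong: if_cong)
  also have "\<dots> = 0" by (simp only: atm_pair mult_zero_right if_cancel sum.neutral_const)
  finally show "FF n x = (FF (Suc n) (x(n := False)) + FF (Suc n) (x(n := True))) / 2"
    by (simp add: FF_Suc l)
qed

lemma cyl_sets': "cyl k \<in> sets walsh_mu"
  using cyl_sets by (simp add: cyl_def)

lemma atm_abs: "\<bar>atm k x\<bar> = indicator (cyl k) x"
  by (simp add: atm_def rad_def dig_def cyl_def indicator_def)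

lemma trm_powr: "ennreal (\<bar>trm j x\<bar> powr p) = ennreal (2 powr (real (ks j) - real j)) * indicator (cyl (ks j)) x"
proof -
  have b: "\<beta> j * 2^(ks j) = 2 powr (real (ks j) / p - real j / p)"
  proof -
    have "\<beta> j * 2^(ks j) = 2 powr (real (ks j) * (1/p - 1) - real j / p) * 2 powr (real (ks j))"
      by (simp add: beta_def powr_realpow)
    also have "\<dots> = 2 powr (real (ks j) * (1/p - 1) - real j / p + real (ks j))"
      by (simp add: powr_add)
    also have "real (ks j) * (1/p - 1) - real j / p + real (ks j) = real (ks j) / p - real j / p"
      by (simp add: algebra_simps)
    finally show ?thesis .
  qed
  have c: "(\<beta> j * 2^(ks j)) powr p = 2 powr (real (ks j) - real j)"
  proof -
    have "(\<beta> j * 2^(ks j)) powr p = 2 powr ((real (ks j) / p - real j / p) * p)"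
      by (simp add: b powr_powr)
    also have "(real (ks j) / p - real j / p) * p = real (ks j) - real j"
      using p_pos by (simp add: field_simps)
    finally show ?thesis .
  qed
  have "\<bar>trm j x\<bar> = (\<beta> j * 2^(ks j)) * indicator (cyl (ks j)) x"
    using beta_pos[of j] by (simp add: trm_def abs_mult atm_abs)
  then show ?thesis
    using c p_pos by (cases "x \<in> cyl (ks j)") auto
qed

lemma FF_Hp: "in_Hp p FF"
  unfolding in_Hp_def
proof (intro conjI FF_mart)
  define G where "G j x = ennreal (2 powr (real (ks j) - real j)) * indicator (cyl (ks j)) x" for j x
  have Gm: "G j \<in> borel_measurable walsh_mu" for j
    unfolding G_def using cyl_sets' by measurable
  have bound: "ennreal (\<bar>FF n x\<bar> powr p) \<le> (\<Sum>j. G j x)" for n x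
  proof -
    have "\<bar>FF n x\<bar> powr p \<le> (\<Sum>j<n. \<bar>if ks j < n then trm j x else 0\<bar> powr p)"
      unfolding FF_def using p_pos p_half by (intro powr_sum_le) auto
    also have "\<dots> \<le> (\<Sum>j<n. \<bar>trm j x\<bar> powr p)"
      by (intro sum_mono) auto
    finally have "ennreal (\<bar>FF n x\<bar> powr p) \<le> ennreal (\<Sum>j<n. \<bar>trm j x\<bar> powr p)"
      by (rule ennreal_leI)
    also have "\<dots> = (\<Sum>j<n. ennreal (\<bar>trm j x\<bar> powr p))"
      by (rule sum_ennreal[symmetric]) simp
    also have "\<dots> = (\<Sum>j<n. G j x)" by (simp add: trm_powr G_def)
    also have "\<dots> \<le> (\<Sum>j. G j x)"
      by (rule sum_le_suminf) (auto intro: summableI)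
    finally show ?thesis .
  qed
  have s1: "(\<integral>\<^sup>+ x. (SUP n. ennreal (\<bar>FF n x\<bar> powr p)) \<partial>walsh_mu) \<le> (\<integral>\<^sup>+ x. (\<Sum>j. G j x) \<partial>walsh_mu)"
    by (intro nn_integral_mono SUP_least bound)
  have s2: "(\<integral>\<^sup>+ x. (\<Sum>j. G j x) \<partial>walsh_mu) = (\<Sum>j. \<integral>\<^sup>+ x. G j x \<partial>walsh_mu)"
    by (rule nn_integral_suminf[OF Gm])
  have s3: "(\<Sum>j. \<integral>\<^sup>+ x. G j x \<partial>walsh_mu) = (\<Sum>j. ennreal ((1/2)^j))"
  proof (intro suminf_cong)
    fix j
    have r: "2 powr (real (ks j) - real j) * (1/2)^(ks j) = (1/2)^j" by (rule half_pow_r)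
    have "(\<integral>\<^sup>+ x. G j x \<partial>walsh_mu) = ennreal (2 powr (real (ks j) - real j)) * emeasure walsh_mu (cyl (ks j))"
      unfolding G_def using cyl_sets' by (rule nn_integral_cmult_indicator)
    also have "\<dots> = ennreal (2 powr (real (ks j) - real j)) * ennreal ((1/2)^(ks j))"
      using emeasure_cyl by (simp add: cyl_def)
    also have "\<dots> = ennreal (2 powr (real (ks j) - real j) * (1/2)^(ks j))"
      by (rule ennreal_mult[symmetric]) simp_all
    also have "\<dots> = ennreal ((1/2)^j)" by (simp only: r)
    finally show "(\<integral>\<^sup>+ x. G j x \<partial>walsh_mu) = ennreal ((1/2)^j)" .
  qed
  have s4: "(\<Sum>j. ennreal ((1/2)^j)) = ennreal (\<Sum>j. (1/2)^j)"
    by (intro suminf_ennreal2) auto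
  have s5: "ennreal (\<Sum>j. (1/2::real)^j) < \<infinity>" by simp
  show "(\<integral>\<^sup>+ x. (SUP n. ennreal (\<bar>FF n x\<bar> powr p)) \<partial>walsh_mu) < \<infinity>"
    using s1 unfolding s2 s3 s4 using s5 by (rule le_less_trans)
qed

lemma trm_meas: "trm j \<in> borel_measurable walsh_mu"
  unfolding trm_def using atm_meas by (intro borel_measurable_times borel_measurable_const)

lemma int_trm_kacz: "(\<integral>x. trm j x * kacz i x \<partial>walsh_mu) = (if 1 \<le> i \<and> topbit i = ks j then \<beta> j else 0)"
proof -
  have "(\<integral>x. trm j x * kacz i x \<partial>walsh_mu) = (\<integral>x. (\<beta> j * 2^(ks j)) * (atm (ks j) x * kacz i x) \<partial>walsh_mu)"
    by (simp add: trm_def mult.assoc)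
  also have "\<dots> = (\<beta> j * 2^(ks j)) * (\<integral>x. atm (ks j) x * kacz i x \<partial>walsh_mu)"
    by (rule integral_mult_right_zero)
  also have "\<dots> = (if 1 \<le> i \<and> topbit i = ks j then \<beta> j else 0)"
    by (simp add: integral_atm_kacz power_one_over)
  finally show ?thesis .
qed

lemma trm_kacz_integrable: "integrable walsh_mu (\<lambda>x. trm j x * kacz i x)"
proof -
  have fm: "finite_measure walsh_mu" using prob_walsh by (rule prob_space.finite_measure)
  have "norm (trm j x * kacz i x) \<le> \<beta> j * 2^(ks j)" for x
    using beta_pos[of j] by (simp add: trm_def abs_mult atm_abs indicator_def)
  then show ?thesis
    using fm trm_meas kacz_meas
    by (intro finite_measure.integrable_const_bound[where B="\<beta> j * 2^(ks j)"]) auto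
qed

lemma int_FF_kacz: "(\<integral>x. FF K x * kacz i x \<partial>walsh_mu) =
   (\<Sum>j<K. if ks j < K then (if 1 \<le> i \<and> topbit i = ks j then \<beta> j else 0) else 0)"
proof -
  have "(\<integral>x. FF K x * kacz i x \<partial>walsh_mu) = (\<integral>x. (\<Sum>j<K. if ks j < K then trm j x * kacz i x else 0) \<partial>walsh_mu)"
    unfolding FF_def sum_distrib_right by (intro Bochner_Integration.integral_cong refl sum.cong) auto
  also have "\<dots> = (\<Sum>j<K. \<integral>x. (if ks j < K then trm j x * kacz i x else 0) \<partial>walsh_mu)"
  proof (rule Bochner_Integration.integral_sum)
    fix j show "integrable walsh_mu (\<lambda>x. if ks j < K then trm j x * kacz i x else 0)"
      by (cases "ks j < K") (simp_all add: trm_kacz_integrable)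
  qed
  also have "\<dots> = (\<Sum>j<K. if ks j < K then (if 1 \<le> i \<and> topbit i = ks j then \<beta> j else 0) else 0)"
    by (intro sum.cong refl) (auto simp: int_trm_kacz)
  finally show ?thesis .
qed

lemma coef_eq: "kacz_coeff FF i = coefb i"
proof -
  have ev: "(\<integral>x. FF K x * kacz i x \<partial>walsh_mu) = coefb i" if K: "K > topbit i" for K
  proof -
    have "(\<Sum>j<K. if ks j < K then (if 1 \<le> i \<and> topbit i = ks j then \<beta> j else 0) else 0)
        = (\<Sum>j<Suc (topbit i). if 1 \<le> i \<and> ks j = topbit i then \<beta> j else 0)"
    proof (rule sum.mono_neutral_cong_right)
      show "{..<Suc (topbit i)} \<subseteq> {..<K}" using K by auto
      show "\<forall>j\<in>{..<K} - {..<Suc (topbit i)}. (if ks j < K then (if 1 \<le> i \<and> topbit i = ks j then \<beta> j else 0) else 0) = 0"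
        using ks_ge by (auto simp: not_less_eq_eq) (metis not_less_eq_eq)
      show "\<And>j. j \<in> {..<Suc (topbit i)} \<Longrightarrow> (if ks j < K then (if 1 \<le> i \<and> topbit i = ks j then \<beta> j else 0) else 0)
          = (if 1 \<le> i \<and> ks j = topbit i then \<beta> j else 0)"
        using K by auto
    qed simp
    then show ?thesis by (simp add: int_FF_kacz coefb_def)
  qed
  have "(\<lambda>K. \<integral>x. FF K x * kacz i x \<partial>walsh_mu) \<longlonglongrightarrow> coefb i"
    by (rule tendsto_eventually) (use ev in \<open>auto simp: eventually_sequentially intro!: exI[of _ "Suc (topbit i)"]\<close>)
  then show ?thesis unfolding kacz_coeff_def by (rule limI)
qed

lemma coefb_top: assumes "1 \<le> i" "topbit i = ks J" shows "coefb i = \<beta> J"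
proof -
  have "coefb i = (\<Sum>j<Suc (ks J). if j = J then \<beta> j else 0)"
    unfolding coefb_def using assms by (intro sum.cong) (auto simp: ks_eq_iff)
  also have "\<dots> = \<beta> J" using ks_ge[of J] by simp
  finally show ?thesis .
qed

lemma coefb_none: assumes "\<And>j. ks j \<noteq> topbit i" shows "coefb i = 0"
  unfolding coefb_def using assms by (intro sum.neutral) auto

lemma coefb_zero: assumes "i < 2^(ks 0)" shows "coefb i = 0"
proof (cases "i = 0")
  case True then show ?thesis by (simp add: coefb_def)
next
  case False
  then have "2^(topbit i) \<le> i" using topbit_bounds[of i] by auto
  then have "(2::nat)^(topbit i) < 2^(ks 0)" using assms by linarith
  then have t: "topbit i < ks 0" by simp
  have "ks j \<noteq> topbit i" for j
  proof -
    have "ks 0 \<le> ks j" using ks_less_iff[of j 0] by (cases j) (auto simp: not_less)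
    then show ?thesis using t by auto
  qed
  then show ?thesis by (rule coefb_none)
qed

lemma coefb_low:
  assumes "1 \<le> J" "i < 2^(ks J)"
  shows "\<bar>coefb i\<bar> \<le> (if i < 2^(ks (J-1)+1) then \<beta> (J-1) else 0)"
proof (cases "i = 0")
  case True then show ?thesis using beta_pos[of "J-1"] by (simp add: coefb_def)
next
  case False
  then have i1: "1 \<le> i" by simp
  then have "2^(topbit i) \<le> i" using topbit_bounds[of i] by auto
  then have "(2::nat)^(topbit i) < 2^(ks J)" using assms by linarith
  then have t: "topbit i < ks J" by simp
  show ?thesis
  proof (cases "\<exists>j. ks j = topbit i")
    case True
    then obtain j where j: "ks j = topbit i" by auto
    then have "ks j < ks J" using t by simp
    then have "j < J" using ks_less_iff by blast
    then have jJ: "j \<le> J - 1" by simp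
    then have "ks j \<le> ks (J-1)" using ks_mono by (simp add: strict_mono_less_eq)
    then have "(2::nat)^(ks j + 1) \<le> 2^(ks (J-1)+1)" by (intro power_increasing) auto
    moreover have "i < 2^(ks j + 1)" using topbit_bounds(2)[OF i1] j by simp
    ultimately have "i < 2^(ks (J-1)+1)" by linarith
    moreover have "coefb i = \<beta> j" using coefb_top[OF i1 j[symmetric]] .
    moreover have "\<beta> j \<le> \<beta> (J-1)" using jJ by (rule beta_mono)
    ultimately show ?thesis using beta_pos[of j] by simp
  next
    case False
    then have "coefb i = 0" by (intro coefb_none) auto
    then show ?thesis using beta_pos[of "J-1"] by simp
  qed
qed

definition SJ :: "nat \<Rightarrow> real" where
  "SJ J = (if J = 0 then 0 else 2^(ks (J-1)+1) * \<beta> (J-1))"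

lemma low_sum: "(\<Sum>i<2^(ks J). \<bar>coefb i\<bar>) \<le> SJ J"
proof (cases "J = 0")
  case True then show ?thesis by (simp add: SJ_def coefb_zero)
next
  case False
  define a where "a = ks (J-1) + 1"
  have "ks (J-1) < ks J" using False ks_less_iff by simp
  then have "(2::nat)^a \<le> 2^(ks J)" unfolding a_def by (intro power_increasing) auto
  have "(\<Sum>i<2^(ks J). \<bar>coefb i\<bar>) \<le> (\<Sum>i<(2::nat)^(ks J). if i \<in> {..<(2::nat)^a} then \<beta> (J-1) else 0)"
    using coefb_low[of J] False by (intro sum_mono) (auto simp: a_def)
  also have "\<dots> = (\<Sum>i\<in>{..<(2::nat)^(ks J)} \<inter> {..<2^a}. \<beta> (J-1))"
    by (rule sum.inter_restrict[symmetric]) simp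
  also have "{..<(2::nat)^(ks J)} \<inter> {..<2^a} = {..<(2::nat)^a}" using \<open>(2::nat)^a \<le> 2^(ks J)\<close> by (auto simp del: power_increasing_iff)
  also have "(\<Sum>i\<in>{..<(2::nat)^a}. \<beta> (J-1)) = SJ J" using False by (simp add: SJ_def a_def)
  finally show ?thesis .
qed

lemma SJ_dom: "2^(ks J + 1) * SJ J \<le> \<beta> J / 2"
proof (cases J)
  case 0 then show ?thesis using beta_pos[of J] by (simp add: SJ_def)
next
  case (Suc J') then show ?thesis using dom[of J'] by (simp add: SJ_def)
qed

lemma fejer_low:
  assumes q: "q < 2^(ks J - 2)"
  shows "\<bar>kacz_fejer FF (2^(ks J) + (4*q+1)) x\<bar> \<ge> \<beta> J / 2^(ks J + 2)"
proof -
  define K where "K = ks J"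
  define M where "M = 4*q+1"
  define m where "m = 2^K + M"
  have K2: "2 \<le> K" using ks_ge2 by (simp add: K_def)
  have p4: "(2::nat)^K = 2^(K-2) * 2^2"
  proof -
    have "K = (K - 2) + 2" using K2 by simp
    then have "(2::nat)^K = 2^((K-2)+2)" by (rule arg_cong)
    then show ?thesis by (simp only: power_add)
  qed
  have "q + 1 \<le> 2^(K-2)" using q by (simp add: K_def)
  then have "4 * (q + 1) \<le> 2^(K-2) * 2^2" by simp
  then have MK: "M < 2^K" using p4 by (simp add: M_def)
  have m_le: "m < 2^(Suc K)" using MK by (simp add: m_def)
  have m_pos: "0 < m" by (simp add: m_def)
  define a where "a k = coefb k * kacz k x" for k
  have fej: "kacz_fejer FF m x = (1 / real m) * (\<Sum>k<m. real (m - k) * a k)"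
  proof -
    have fs: "(\<Sum>j=1..m. \<Sum>k<j. coefb k * kacz k x) = (\<Sum>k<m. real (m - k) * (coefb k * kacz k x))"
      by (rule fejer_swap)
    show ?thesis unfolding kacz_fejer_def kacz_partial_def coef_eq a_def fs ..
  qed
  have split: "(\<Sum>k<m. real (m - k) * a k) = (\<Sum>k<2^K. real (m - k) * a k) + \<beta> J * (\<Sum>r<M. real (M - r) * kacz (2^K + r) x)"
  proof -
    have "(\<Sum>k<m. real (m - k) * a k) = (\<Sum>k<2^K. real (m - k) * a k) + (\<Sum>r<M. real (m - (2^K + r)) * a (2^K + r))"
      unfolding m_def by (rule sum_split_add)
    also have "(\<Sum>r<M. real (m - (2^K + r)) * a (2^K + r)) = (\<Sum>r<M. \<beta> J * (real (M - r) * kacz (2^K + r) x))"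
    proof (intro sum.cong refl)
      fix r assume "r \<in> {..<M}"
      then have r: "r < M" by simp
      have tb: "topbit (2^K + r) = ks J" using r MK by (intro topbit_eq) (auto simp: K_def)
      have one: "1 \<le> (2::nat)^K + r" using one_le_power[of "2::nat" K] by linarith
      have "coefb (2^K + r) = \<beta> J" by (rule coefb_top[OF one tb])
      moreover have "m - (2^K + r) = M - r" by (simp add: m_def)
      ultimately show "real (m - (2^K + r)) * a (2^K + r) = \<beta> J * (real (M - r) * kacz (2^K + r) x)"
        by (simp add: a_def)
    qed
    also have "\<dots> = \<beta> J * (\<Sum>r<M. real (M - r) * kacz (2^K + r) x)" by (simp add: sum_distrib_left)
    finally show ?thesis .
  qed
  define T where "T = (\<Sum>r<M. real (M - r) * kacz (2^K + r) x)"
  have T1: "1 \<le> \<bar>T\<bar>" unfolding T_def M_def by (rule parity_sum) (rule kacz_pm)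
  have low: "\<bar>\<Sum>k<2^K. real (m - k) * a k\<bar> \<le> real m * SJ J"
  proof -
    have "\<bar>\<Sum>k<2^K. real (m - k) * a k\<bar> \<le> (\<Sum>k<2^K. \<bar>real (m - k) * a k\<bar>)" by (rule sum_abs)
    also have "\<dots> \<le> (\<Sum>k<2^K. real m * \<bar>coefb k\<bar>)"
      by (intro sum_mono) (auto simp: a_def abs_mult intro!: mult_right_mono)
    also have "\<dots> = real m * (\<Sum>k<2^K. \<bar>coefb k\<bar>)" by (simp add: sum_distrib_left)
    also have "\<dots> \<le> real m * SJ J" unfolding K_def by (intro mult_left_mono low_sum) auto
    finally show ?thesis .
  qed
  have SJ0: "0 \<le> SJ J" using beta_pos by (simp add: SJ_def less_imp_le)
  have mr: "real m \<le> 2^(Suc K)" using m_le by (metis less_imp_le of_nat_le_iff of_nat_numeral of_nat_power)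
  have "real m * SJ J \<le> 2^(Suc K) * SJ J"
    using mr SJ0 by (intro mult_right_mono)
  also have "\<dots> \<le> \<beta> J / 2" using SJ_dom[of J] by (simp add: K_def)
  finally have mS: "real m * SJ J \<le> \<beta> J / 2" .
  have "\<beta> J \<le> \<beta> J * \<bar>T\<bar>" using T1 beta_pos[of J] by simp
  moreover define A where "A = (\<Sum>k<2^K. real (m - k) * a k)"
  moreover have e1: "\<bar>\<beta> J * T\<bar> \<le> \<bar>A + \<beta> J * T\<bar> + \<bar>A\<bar>"
    using abs_triangle_ineq4[of "A + \<beta> J * T" A] by simp
  moreover have e2: "\<bar>\<beta> J * T\<bar> = \<beta> J * \<bar>T\<bar>" using beta_pos[of J] by (simp add: abs_mult)
  ultimately have big: "\<beta> J / 2 \<le> \<bar>\<Sum>k<m. real (m - k) * a k\<bar>"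
    using low mS unfolding split T_def[symmetric] A_def[symmetric] by linarith
  have "\<beta> J / 2^(K + 2) = (\<beta> J / 2) / 2^(Suc K)" by (simp add: field_simps)
  also have "\<dots> \<le> (\<beta> J / 2) / real m"
    using m_pos mr beta_pos[of J] by (intro divide_left_mono) simp_all
  also have "\<dots> \<le> \<bar>\<Sum>k<m. real (m - k) * a k\<bar> / real m"
    using big m_pos by (intro divide_right_mono) auto
  also have "\<dots> = \<bar>kacz_fejer FF m x\<bar>" using m_pos by (simp add: fej abs_mult)
  finally show ?thesis by (simp add: K_def M_def m_def)
qed

lemma weak_low:
  assumes q: "q < 2^(ks J - 2)"
  shows "weak_Lp_pow p (kacz_fejer FF (2^(ks J) + (4*q+1))) \<ge> ennreal (2 powr (real (ks J) * (1 - 2*p) - real J - 3*p))"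
proof -
  define g where "g = kacz_fejer FF (2^(ks J) + (4*q+1))"
  define t where "t = \<beta> J / 2^(ks J + 3)"
  have tpos: "0 < t" using beta_pos[of J] by (simp add: t_def)
  have "t < \<beta> J / 2^(ks J + 2)" using beta_pos[of J] by (simp add: t_def field_simps power_add)
  then have all: "{x \<in> space walsh_mu. \<bar>g x\<bar> > t} = UNIV"
    using fejer_low[OF q] by (auto simp: g_def intro: less_le_trans)
  have em: "emeasure walsh_mu UNIV = 1"
    using prob_space.emeasure_space_1[OF prob_walsh] by simp
  have "ennreal (t powr p) = ennreal (t powr p) * emeasure walsh_mu {x \<in> space walsh_mu. \<bar>g x\<bar> > t}"
    by (simp only: all em mult_1_right)
  also have "\<dots> \<le> weak_Lp_pow p g"
    unfolding weak_Lp_pow_def using tpos by (intro SUP_upper) auto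
  finally have w: "ennreal (t powr p) \<le> weak_Lp_pow p g" .
  have "t = 2 powr (real (ks J) * (1/p - 1) - real J / p - (real (ks J) + 3))"
    by (simp add: t_def beta_def powr_diff powr_realpow[symmetric] powr_add)
  then have "t powr p = 2 powr ((real (ks J) * (1/p - 1) - real J / p - (real (ks J) + 3)) * p)"
    by (simp add: powr_powr)
  also have "(real (ks J) * (1/p - 1) - real J / p - (real (ks J) + 3)) * p = real (ks J) * (1 - 2*p) - real J - 3*p"
    using p_pos by (simp add: field_simps)
  finally show ?thesis using w by (simp add: g_def)
qed

lemma qM: assumes q: "q < 2^(ks J - 2)" shows "4*q+1 < (2::nat)^(ks J)"
proof -
  define K where "K = ks J"
  have K2: "2 \<le> K" using ks_ge2 by (simp add: K_def)
  have p4: "(2::nat)^K = 2^(K-2) * 2^2"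
  proof -
    have "K = (K - 2) + 2" using K2 by simp
    then have "(2::nat)^K = 2^((K-2)+2)" by (rule arg_cong)
    then show ?thesis by (simp only: power_add)
  qed
  have "q + 1 \<le> 2^(K-2)" using q by (simp add: K_def)
  then have "4 * (q + 1) \<le> 2^(K-2) * 2^2" by simp
  then show ?thesis using p4 by (simp add: K_def)
qed

lemma block_sum:
  fixes \<Phi> :: "nat \<Rightarrow> real"
  assumes \<Phi>1: "\<And>n. n \<ge> 1 \<Longrightarrow> \<Phi> n \<ge> 1"
    and \<Phi>mono: "\<And>m n. 1 \<le> m \<Longrightarrow> m \<le> n \<Longrightarrow> \<Phi> m \<le> \<Phi> n"
  shows "(\<Sum>i. weak_Lp_pow p (kacz_fejer FF (Suc i)) / ennreal (\<Phi> (Suc i)))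
     \<ge> ennreal (2^(ks J - 2) * 2 powr (real (ks J) * (1 - 2*p) - real J - 3*p) / \<Phi> (2^(ks J + 1)))"
proof -
  define f where "f i = weak_Lp_pow p (kacz_fejer FF (Suc i)) / ennreal (\<Phi> (Suc i))" for i
  define K where "K = ks J"
  define N where "N = (2::nat)^(K - 2)"
  define w where "w = 2 powr (real (ks J) * (1 - 2*p) - real J - 3*p)"
  define \<Psi> where "\<Psi> = \<Phi> (2^(K + 1))"
  have w0: "0 \<le> w" by (simp add: w_def)
  have tq: "ennreal (w / \<Psi>) \<le> f (2^K + 4*q)" if q: "q < N" for q
  proof -
    have q': "q < 2^(ks J - 2)" using q by (simp add: N_def K_def)
    define m where "m = 2^K + (4*q+1)"
    have m1: "1 \<le> m" by (simp add: m_def)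
    have "m < 2^(Suc K)" using qM[OF q'] by (simp add: m_def K_def)
    then have mle: "m \<le> 2^(K+1)" by simp
    have \<Phi>m: "1 \<le> \<Phi> m" using \<Phi>1 m1 by simp
    have \<Phi>mP: "\<Phi> m \<le> \<Psi>" unfolding \<Psi>_def by (rule \<Phi>mono[OF m1 mle])
    have "f (2^K + 4*q) = weak_Lp_pow p (kacz_fejer FF m) / ennreal (\<Phi> m)"
      by (simp add: f_def m_def)
    also have "\<dots> \<ge> ennreal w / ennreal (\<Phi> m)"
      using weak_low[OF q'] by (intro divide_right_mono_ennreal) (simp add: m_def K_def w_def)
    finally have "ennreal w / ennreal (\<Phi> m) \<le> f (2^K + 4*q)" .
    moreover have "ennreal w / ennreal (\<Phi> m) = ennreal (w / \<Phi> m)"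
      using w0 \<Phi>m by (intro divide_ennreal) auto
    moreover have "w / \<Psi> \<le> w / \<Phi> m"
      using w0 \<Phi>m \<Phi>mP by (intro divide_left_mono) auto
    ultimately show ?thesis by (metis ennreal_leI order_trans)
  qed
  define S where "S = (\<lambda>q. 2^K + 4*q) ` {..<N}"
  have inj: "inj_on (\<lambda>q. (2::nat)^K + 4*q) {..<N}" by (auto simp: inj_on_def)
  have "(\<Sum>q<N. ennreal (w / \<Psi>)) = ennreal (\<Sum>q<N. w / \<Psi>)"
    using w0 \<Phi>1[of "2^(K+1)"] by (intro sum_ennreal) (simp add: \<Psi>_def)
  then have "ennreal (real N * (w / \<Psi>)) = (\<Sum>q<N. ennreal (w / \<Psi>))" by simp
  also have "\<dots> \<le> (\<Sum>q<N. f (2^K + 4*q))"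
    by (intro sum_mono tq) auto
  also have "\<dots> = sum f S" unfolding S_def by (simp add: sum.reindex[OF inj])
  also have "\<dots> \<le> suminf f"
    by (rule sum_le_suminf) (auto intro: summableI simp: S_def)
  finally have "ennreal (real N * (w / \<Psi>)) \<le> suminf f" .
  moreover have "real N * (w / \<Psi>) = 2^(ks J - 2) * 2 powr (real (ks J) * (1 - 2*p) - real J - 3*p) / \<Phi> (2^(ks J + 1))"
    by (simp add: N_def w_def \<Psi>_def K_def)
  ultimately show ?thesis by (simp add: f_def[abs_def])
qed

end



definition bf :: "real \<Rightarrow> nat \<Rightarrow> nat \<Rightarrow> real" where
  "bf p J k = 2 powr (real k * (1/p - 1) - real J / p)"

lemma beta_bf: "beta p ks J = bf p J (ks J)" by (simp add: beta_def bf_def)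

lemma dom_ev:
  assumes p: "0 < p" "p < 1/2"
  shows "\<exists>N. \<forall>k\<ge>N. 2^(k+1) * C \<le> bf p (Suc J) k / 2"
proof -
  define a where "a = 1/p - 2"
  have a0: "0 < a" using p by (simp add: a_def field_simps)
  define b where "b = 2 powr a"
  have b1: "1 < b" using a0 by (simp add: b_def)
  define D where "D = 2 powr (- (real J + 1)/p - 2)"
  have D0: "0 < D" by (simp add: D_def)
  obtain N where N: "C / D < b^N" using real_arch_pow[OF b1] by blast
  have id: "2^(k+1) * (b^k * D) = bf p (Suc J) k / 2" for k
  proof -
    have "b^k = 2 powr (a * real k)" by (simp add: b_def powr_powr[symmetric] powr_realpow)
    moreover have "2 powr (real (k+1)) = (2::real)^(k+1)" by (rule powr_realpow) simp
    ultimately have "2^(k+1) * (b^k * D) = 2 powr (real (k+1)) * (2 powr (a * real k) * 2 powr (- (real J + 1)/p - 2))"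
      by (simp add: D_def)
    also have "\<dots> = 2 powr (real (k+1) + a * real k + (- (real J + 1)/p - 2))"
      by (simp only: powr_add mult.assoc)
    also have "real (k+1) = real k + 1" by simp
    also have "real k + 1 + a * real k + (- (real J + 1)/p - 2) = (real k * (1/p - 1) - real (Suc J) / p) - 1"
      using p by (simp add: a_def field_simps)
    also have "2 powr \<dots> = bf p (Suc J) k / 2"
      by (simp add: bf_def powr_diff)
    finally show ?thesis .
  qed
  show ?thesis
  proof (intro exI allI impI)
    fix k assume k: "N \<le> k"
    have "b^N \<le> b^k" using b1 k by (intro power_increasing) auto
    then have "C / D \<le> b^k" using N by linarith
    then have "C \<le> b^k * D" using D0 by (simp add: field_simps)
    then have "2^(k+1) * C \<le> 2^(k+1) * (b^k * D)" by (intro mult_left_mono) auto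
    then show "2^(k+1) * C \<le> bf p (Suc J) k / 2" by (simp only: id)
  qed
qed

lemma freq:
  assumes "limsup X = (\<infinity>::ereal)"
  shows "\<exists>k\<ge>N. X k > ereal B"
proof (rule ccontr)
  assume "\<not> ?thesis"
  then have "\<forall>\<^sub>F k in sequentially. X k \<le> ereal B"
    by (auto simp: eventually_sequentially not_less)
  then have "limsup X \<le> ereal B" by (rule Limsup_bounded)
  then show False using assms by simp
qed

lemma ennreal_top_of_nat:
  assumes "\<And>J::nat. ennreal (real J) \<le> x"
  shows "x = \<infinity>"
proof -
  have "(SUP J. of_nat J :: ennreal) \<le> x"
    using assms by (intro SUP_least) (simp add: ennreal_of_nat_eq_real_of_nat)
  then show ?thesis by (simp add: ennreal_SUP_of_nat_eq_top top_unique)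
qed

lemma numeric:
  fixes p \<Psi> :: real
  assumes p: "0 < p" "p < 1/2" and K: "2 \<le> K" and \<Psi>: "1 \<le> \<Psi>"
    and R: "2 powr (real (K+1) * (2 - 2*p)) / \<Psi> \<ge> 2 powr (2 * real J + 8)"
  shows "real J \<le> 2^(K-2) * 2 powr (real K * (1 - 2*p) - real J - 3*p) / \<Psi>"
proof -
  have e1: "(2::real)^(K-2) = 2 powr (real K - 2)"
    using K by (simp add: powr_realpow[symmetric] of_nat_diff)
  have "2^(K-2) * 2 powr (real K * (1 - 2*p) - real J - 3*p) / \<Psi>
      = 2 powr (real K - 2 + (real K * (1 - 2*p) - real J - 3*p)) / \<Psi>"
    by (simp add: e1 powr_add)
  also have "real K - 2 + (real K * (1 - 2*p) - real J - 3*p) = real (K+1) * (2 - 2*p) + (- 4 - p - real J)"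
    by (simp add: algebra_simps)
  also have "2 powr (real (K+1) * (2 - 2*p) + (- 4 - p - real J)) / \<Psi>
      = (2 powr (real (K+1) * (2 - 2*p)) / \<Psi>) * 2 powr (- 4 - p - real J)"
    by (simp add: powr_add)
  finally have eq: "2^(K-2) * 2 powr (real K * (1 - 2*p) - real J - 3*p) / \<Psi>
      = (2 powr (real (K+1) * (2 - 2*p)) / \<Psi>) * 2 powr (- 4 - p - real J)" .
  have "2 powr (2 * real J + 8) * 2 powr (- 4 - p - real J) \<le> (2 powr (real (K+1) * (2 - 2*p)) / \<Psi>) * 2 powr (- 4 - p - real J)"
    using R by (intro mult_right_mono) auto
  moreover have "2 powr (2 * real J + 8) * 2 powr (- 4 - p - real J) = 2 powr (real J + (4 - p))"
    by (simp add: powr_add[symmetric] algebra_simps)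
  moreover have "2 powr (real J) \<le> 2 powr (real J + (4 - p))" using p by (intro powr_mono) auto
  moreover have "real J \<le> 2 powr (real J)"
  proof -
    have "J < 2^J" by (rule less_exp)
    then have "real J \<le> 2^J" by (metis less_imp_le of_nat_le_iff of_nat_numeral of_nat_power)
    then show ?thesis by (simp add: powr_realpow)
  qed
  ultimately show ?thesis unfolding eq by linarith
qed

theorem theorem2:
  fixes p :: real and \<Phi> :: "nat \<Rightarrow> real"
  assumes "0 < p" "p < 1/2"
    and "\<And>n. n \<ge> 1 \<Longrightarrow> \<Phi> n \<ge> 1"
    and "\<And>m n. 1 \<le> m \<Longrightarrow> m \<le> n \<Longrightarrow> \<Phi> m \<le> \<Phi> n"
    and "filterlim \<Phi> at_top sequentially"
    and "limsup (\<lambda>k. ereal (2 powr (real k * (2 - 2 * p)) / \<Phi> (2 ^ k))) = \<infinity>"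
  shows "\<exists>F. in_Hp p F \<and>
           (\<Sum>m. weak_Lp_pow p (kacz_fejer F (Suc m)) / ennreal (\<Phi> (Suc m))) = \<infinity>"
proof -
  define R where "R k = 2 powr (real k * (2 - 2 * p)) / \<Phi> (2 ^ k)" for k
  have fr: "\<exists>k\<ge>N. R k > B" for N B
    using freq[OF assms(6), of N B] by (simp add: R_def)
  define P where "P J k0 k \<longleftrightarrow> k0 < k \<and> R (k+1) \<ge> 2 powr (2 * real (Suc J) + 8) \<and>
      2^(k+1) * (2^(k0+1) * bf p J k0) \<le> bf p (Suc J) k / 2" for J k0 k
  have step: "\<exists>k. P J k0 k" for J k0
  proof -
    obtain N where N: "\<forall>k\<ge>N. 2^(k+1) * (2^(k0+1) * bf p J k0) \<le> bf p (Suc J) k / 2"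
      using dom_ev[OF assms(1,2)] by blast
    obtain k' where k': "k' \<ge> max N (k0+1) + 1" "R k' > 2 powr (2 * real (Suc J) + 8)"
      using fr by blast
    define k where "k = k' - 1"
    have kk: "k' = k + 1" using k' by (simp add: k_def)
    have "k0 < k" "N \<le> k" using k' by (auto simp: k_def)
    then have "P J k0 k" unfolding P_def using k'(2) N kk by auto
    then show ?thesis by blast
  qed
  have base: "\<exists>k. 2 \<le> k \<and> R (k+1) \<ge> 2 powr 8"
  proof -
    obtain k' where k': "k' \<ge> 3" "R k' > 2 powr 8" using fr by blast
    then have "2 \<le> k' - 1 \<and> R (k' - 1 + 1) \<ge> 2 powr 8" by auto
    then show ?thesis by blast
  qed
  define ks where "ks = rec_nat (SOME k. 2 \<le> k \<and> R (k+1) \<ge> 2 powr 8) (\<lambda>J kJ. SOME k. P J kJ k)"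
  have ks0: "2 \<le> ks 0 \<and> R (ks 0 + 1) \<ge> 2 powr 8"
    unfolding ks_def using someI_ex[OF base] by simp
  have ksS: "P J (ks J) (ks (Suc J))" for J
    unfolding ks_def using someI_ex[OF step] by simp
  have smono: "strict_mono ks"
    using ksS by (intro strict_mono_Suc_iff[THEN iffD2]) (auto simp: P_def)
  have ge2: "2 \<le> ks J" for J
  proof (induction J)
    case 0 then show ?case using ks0 by simp
  next
    case (Suc J) then show ?case using ksS[of J] by (auto simp: P_def)
  qed
  have Rks: "R (ks J + 1) \<ge> 2 powr (2 * real J + 8)" for J
  proof (cases J)
    case 0 then show ?thesis using ks0 by simp
  next
    case (Suc J') then show ?thesis using ksS[of J'] by (simp add: P_def)
  qed
  interpret C: constr p ks
  proof
    show "0 < p" "p < 1/2" by (rule assms(1), rule assms(2))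
    show "strict_mono ks" by (rule smono)
    show "\<And>J. 2 \<le> ks J" by (rule ge2)
    show "\<And>J. 2^(ks (Suc J) + 1) * (2^(ks J + 1) * beta p ks J) \<le> beta p ks (Suc J) / 2"
      using ksS by (simp add: P_def beta_bf)
  qed
  have "(\<Sum>m. weak_Lp_pow p (kacz_fejer C.FF (Suc m)) / ennreal (\<Phi> (Suc m))) = \<infinity>"
  proof (rule ennreal_top_of_nat)
    fix J
    have "real J \<le> 2^(ks J - 2) * 2 powr (real (ks J) * (1 - 2*p) - real J - 3*p) / \<Phi> (2^(ks J + 1))"
    proof (rule numeric[OF assms(1,2) ge2])
      show "1 \<le> \<Phi> (2^(ks J + 1))" by (rule assms(3)) simp
      show "2 powr (real (ks J + 1) * (2 - 2*p)) / \<Phi> (2^(ks J + 1)) \<ge> 2 powr (2 * real J + 8)"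
        using Rks[of J] by (simp add: R_def)
    qed
    then have "ennreal (real J) \<le> ennreal (2^(ks J - 2) * 2 powr (real (ks J) * (1 - 2*p) - real J - 3*p) / \<Phi> (2^(ks J + 1)))"
      by (rule ennreal_leI)
    also have "\<dots> \<le> (\<Sum>m. weak_Lp_pow p (kacz_fejer C.FF (Suc m)) / ennreal (\<Phi> (Suc m)))"
      by (rule C.block_sum[OF assms(3,4)])
    finally show "ennreal (real J) \<le> (\<Sum>m. weak_Lp_pow p (kacz_fejer C.FF (Suc m)) / ennreal (\<Phi> (Suc m)))" .
  qed
  then show ?thesis using C.FF_Hp by blast
qed


end
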